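(* Let $t$ be a Pólya tree with $k\ge 2$ nodes, let $w(t)=\ell(t)/k!$, and let $\tilde\rho=1+\epsilon$ be the smallest positive real number satisfying $\int_0^{\tilde\rho} e^{-w(t)v^k}\,dv = 1$ (the dominant singularity of $S_t$). Then \[ \tilde\rho = 1+\epsilon < 1 + \frac{2w(t)}{k}. \]
   Context: A Pólya tree is an unlabeled rooted non-plane tree. For a Pólya tree $t$ with $k$ nodes, $\ell(t)$ is the number of labelings of its nodes by $1,\dots,k$ that increase along every path from the root. $S_t(z)=\ln\frac{1}{1-\int_0^z e^{-w(t)v^k}\,dv}-w(t)z^k$ is the exponential generating function of recursive trees (increasingly labeled rooted non-plane trees) having no fringe subtree of shape $t$; its dominant singularity is the smallest positive solution of the equation above. *)

theory Defs
  imports "HOL-Analysis.Analysis" "HOL-Library.Multiset"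
begin

text \<open>Polya trees: unlabeled rooted non-plane trees (children form a multiset).\<close>
datatype ptree = PNode "ptree multiset"

datatype ltree = LNode nat "ltree multiset"

primrec nodes :: "ptree \<Rightarrow> nat" where
  "nodes (PNode M) = Suc (\<Sum>\<^sub># (image_mset nodes M))"

primrec root_label :: "ltree \<Rightarrow> nat" where
  "root_label (LNode a M) = a"

primrec labels :: "ltree \<Rightarrow> nat multiset" where
  "labels (LNode a M) = {#a#} + \<Sum>\<^sub># (image_mset labels M)"

primrec increasing :: "ltree \<Rightarrow> bool" where
  "increasing (LNode a M) = (\<forall>x \<in># image_mset (\<lambda>c. (root_label c, increasing c)) M. a < fst x \<and> snd x)"

primrec shape :: "ltree \<Rightarrow> ptree" where
  "shape (LNode a M) = PNode (image_mset shape M)"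

text \<open>Number of increasing labelings of t by 1..k (k = number of nodes),
  i.e. number of recursive trees of shape t.\<close>
definition ell :: "ptree \<Rightarrow> nat" where
  "ell t = card {lt. shape lt = t \<and> labels lt = mset_set {1..nodes t} \<and> increasing lt}"

definition wt :: "ptree \<Rightarrow> real" where
  "wt t = real (ell t) / fact (nodes t)"

end

theory Submission
  imports Defs
begin

primrec ins :: "nat \<Rightarrow> nat \<Rightarrow> ltree \<Rightarrow> ltree" where
  "ins p m (LNode a N) = (if a = p then LNode a (N + {#LNode m {#}#}) else LNode a (image_mset (ins p m) N))"

lemma increasing_LNode: "increasing (LNode a N) \<longleftrightarrow> (\<forall>c\<in>#N. a < root_label c \<and> increasing c)"
  by auto

lemma root_in_labels: "root_label x \<in># labels x"
  by (cases x) auto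

lemma ins_root: "root_label (ins p m x) = root_label x"
  by (cases x) auto

lemma ins_notin: "\<not> p \<in># labels x \<Longrightarrow> ins p m x = x"
proof (induction x)
  case (LNode a N)
  have "image_mset (ins p m) N = N"
  proof -
    have "image_mset (ins p m) N = image_mset id N"
      by (rule image_mset_cong) (use LNode in auto)
    then show ?thesis by simp
  qed
  then show ?case using LNode.prems by auto
qed

lemma root_le: "increasing x \<Longrightarrow> y \<in># labels x \<Longrightarrow> root_label x \<le> y"
proof (induction x arbitrary: y)
  case (LNode a N)
  show ?case
  proof (cases "y = a")
    case False
    then obtain c where c: "c \<in># N" "y \<in># labels c" using LNode.prems by auto
    then have "root_label c \<le> y" using LNode by auto
    moreover have "a < root_label c" using c LNode.prems by auto
    ultimately show ?thesis by simp
  qed simp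
qed

definition dst :: "nat multiset \<Rightarrow> bool" where "dst A \<longleftrightarrow> (\<forall>x. count A x \<le> 1)"

lemma dst_sub: "dst A \<Longrightarrow> B \<subseteq># A \<Longrightarrow> dst B"
  unfolding dst_def by (meson mset_subset_eq_count order_trans)

lemma labels_child_sub: "c \<in># N \<Longrightarrow> labels c \<subseteq># labels (LNode a N)"
proof -
  assume "c \<in># N"
  then have "labels c \<subseteq># \<Sum>\<^sub># (image_mset labels N)"
    by (metis image_mset_add_mset insert_DiffM mset_subset_eq_add_left sum_mset.insert)
  moreover have "\<Sum>\<^sub># (image_mset labels N) \<subseteq># add_mset a (\<Sum>\<^sub># (image_mset labels N))"
    by (metis add_mset_add_single mset_subset_eq_add_left)
  ultimately show ?thesis by (simp add: subset_mset.order_trans)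
qed

lemma decomp:
  "increasing lt \<Longrightarrow> dst (labels lt) \<Longrightarrow> m \<in># labels lt \<Longrightarrow> (\<forall>x\<in>#labels lt. x \<le> m)
   \<Longrightarrow> m \<noteq> root_label lt \<Longrightarrow>
   \<exists>t' p. increasing t' \<and> labels t' = labels lt - {#m#} \<and> p \<in># labels t' \<and> lt = ins p m t'"
proof (induction lt)
  case (LNode a N)
  let ?S = "\<Sum>\<^sub># (image_mset labels N)"
  from LNode.prems obtain c where c: "c \<in># N" "m \<in># labels c" by auto
  have Nc: "N = add_mset c (N - {#c#})" using c by simp
  have Sc: "?S = labels c + \<Sum>\<^sub># (image_mset labels (N - {#c#}))"
    by (subst Nc) simp
  have csub: "labels c \<subseteq># labels (LNode a N)" using c labels_child_sub by blast
  have cinc: "increasing c" using c LNode.prems by auto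
  have aroot: "a < root_label c" using c LNode.prems by auto
  show ?case
  proof (cases "m = root_label c")
    case True
    obtain b Nc' where cc: "c = LNode b Nc'" by (cases c)
    have "Nc' = {#}"
    proof (rule ccontr)
      assume "Nc' \<noteq> {#}"
      then obtain d where d: "d \<in># Nc'" by blast
      then have "m < root_label d" using cinc cc True by auto
      moreover have "root_label d \<in># labels c" using d cc root_in_labels[of d] by auto
      ultimately show False using csub LNode.prems(4) by (meson leD mset_subset_eqD)
    qed
    then have c1: "c = LNode m {#}" using cc True by simp
    define t' where "t' = LNode a (N - {#c#})"
    have "increasing t'" using LNode.prems(1) unfolding t'_def by (auto dest: in_diffD)
    moreover have "labels t' = labels (LNode a N) - {#m#}"
      unfolding t'_def using Sc c1 by simp
    moreover have "a \<in># labels t'" unfolding t'_def by simp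
    moreover have "LNode a N = ins a m t'"
    proof -
      have "ins a m t' = LNode a (add_mset c (N - {#c#}))" unfolding t'_def using c1 by simp
      then show ?thesis using Nc by metis
    qed
    ultimately show ?thesis by blast
  next
    case False
    have "dst (labels c)" using csub LNode.prems(2) dst_sub by blast
    moreover have "\<forall>x\<in>#labels c. x \<le> m" using csub LNode.prems(4) by (meson mset_subset_eqD)
    ultimately obtain c' p where c': "increasing c'" "labels c' = labels c - {#m#}" "p \<in># labels c'" "c = ins p m c'"
      using LNode.IH[of c] c cinc False by blast
    have pc: "p \<in># labels c" using c'(2,3) by (metis in_diffD)
    have cnt: "count (labels (LNode a N)) p \<le> 1" using LNode.prems(2) unfolding dst_def by blast
    have pa: "p \<noteq> a"
    proof
      assume "p = a"
      then have "count (labels (LNode a N)) p \<ge> 1 + count (labels c) p" using Sc by simp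
      moreover have "count (labels c) p \<ge> 1" using pc by simp
      ultimately show False using cnt by linarith
    qed
    have pd: "\<not> p \<in># labels d" if "d \<in># N - {#c#}" for d
    proof
      assume pd: "p \<in># labels d"
      have "labels d \<subseteq># \<Sum>\<^sub># (image_mset labels (N - {#c#}))"
        using that by (metis image_mset_add_mset insert_DiffM mset_subset_eq_add_left sum_mset.insert)
      then have "count (\<Sum>\<^sub># (image_mset labels (N - {#c#}))) p \<ge> 1" using pd
        by (metis count_greater_eq_one_iff mset_subset_eqD)
      moreover have "count (labels (LNode a N)) p \<ge> count (labels c) p + count (\<Sum>\<^sub># (image_mset labels (N - {#c#}))) p"
        using Sc by simp
      moreover have "count (labels c) p \<ge> 1" using pc by simp
      ultimately show False using cnt by linarith
    qed
    define t' where "t' = LNode a (add_mset c' (N - {#c#}))"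
    have "increasing t'" using LNode.prems(1) c'(1) aroot ins_root[of p m c'] c'(4) unfolding t'_def
      by (auto dest: in_diffD)
    moreover have "labels t' = labels (LNode a N) - {#m#}"
      unfolding t'_def using Sc c'(2) c(2) by simp
    moreover have "p \<in># labels t'" unfolding t'_def using c'(3) by simp
    moreover have "LNode a N = ins p m t'"
    proof -
      have "image_mset (ins p m) (N - {#c#}) = image_mset id (N - {#c#})"
        by (rule image_mset_cong) (use pd ins_notin in auto)
      then have "ins p m t' = LNode a (add_mset c (N - {#c#}))" unfolding t'_def using pa c'(4) by simp
      then show ?thesis using Nc by metis
    qed
    ultimately show ?thesis by blast
  qed
qed

definition RR :: "nat multiset \<Rightarrow> ltree set" where
  "RR A = {lt. increasing lt \<and> labels lt = A}"

lemma RR_single: "RR {#a#} \<subseteq> {LNode a {#}}"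
proof
  fix lt assume "lt \<in> RR {#a#}"
  then have lt: "increasing lt" "labels lt = {#a#}" unfolding RR_def by auto
  obtain b N where bN: "lt = LNode b N" by (cases lt)
  have "N = {#}"
  proof (rule ccontr)
    assume "N \<noteq> {#}"
    then obtain c where c: "c \<in># N" by blast
    have "root_label c \<in># \<Sum>\<^sub># (image_mset labels N)" using c root_in_labels[of c] by auto
    then show False using lt(2) bN by simp
  qed
  then show "lt \<in> {LNode a {#}}" using lt(2) bN by simp
qed

lemma count_RR: "finite S \<Longrightarrow> card S = Suc n \<Longrightarrow> finite (RR (mset_set S)) \<and> card (RR (mset_set S)) \<le> fact n"
proof (induction n arbitrary: S)
  case 0
  then obtain a where "S = {a}" using card_1_singletonE by (metis One_nat_def)
  then have "RR (mset_set S) \<subseteq> {LNode a {#}}" using RR_single by simp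
  then show ?case by (auto simp: subset_singleton_iff)
next
  case (Suc n)
  define m where "m = Max S"
  define S' where "S' = S - {m}"
  have Sne: "S \<noteq> {}" using Suc.prems by auto
  have mS: "m \<in> S" unfolding m_def using Sne Suc.prems(1) by simp
  have cS': "card S' = Suc n" unfolding S'_def using mS Suc.prems by simp
  have fS': "finite S'" unfolding S'_def using Suc.prems by simp
  from Suc.IH[OF fS' cS'] have IH: "finite (RR (mset_set S'))" "card (RR (mset_set S')) \<le> fact n" by auto
  have sub: "RR (mset_set S) \<subseteq> (\<lambda>(t', p). ins p m t') ` (RR (mset_set S') \<times> S')"
  proof
    fix lt assume "lt \<in> RR (mset_set S)"
    then have lt: "increasing lt" "labels lt = mset_set S" unfolding RR_def by auto
    have "dst (labels lt)" using lt(2) unfolding dst_def by (simp add: count_mset_set')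
    moreover have "m \<in># labels lt" using lt(2) mS Suc.prems(1) by simp
    moreover have "\<forall>x\<in>#labels lt. x \<le> m" using lt(2) Suc.prems(1) unfolding m_def by simp
    moreover have "m \<noteq> root_label lt"
    proof
      assume rm: "m = root_label lt"
      obtain y where y: "y \<in> S'" using cS' by fastforce
      then have "y \<in> S" "y \<noteq> m" unfolding S'_def by auto
      then have "y < m" unfolding m_def using Suc.prems(1) by (metis Max_ge order_le_neq_trans m_def)
      moreover have "root_label lt \<le> y" using root_le[OF lt(1)] lt(2) \<open>y \<in> S\<close> Suc.prems(1) by simp
      ultimately show False using rm by simp
    qed
    ultimately obtain t' p where tp: "increasing t'" "labels t' = labels lt - {#m#}" "p \<in># labels t'" "lt = ins p m t'"
      using decomp[OF lt(1)] by blast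
    have "labels t' = mset_set S'" using tp(2) lt(2) mset_set_Diff[of S "{m}"] mS Suc.prems(1)
      unfolding S'_def by simp
    then have "t' \<in> RR (mset_set S')" "p \<in> S'" using tp(1,3) fS' unfolding RR_def by auto
    then show "lt \<in> (\<lambda>(t', p). ins p m t') ` (RR (mset_set S') \<times> S')" using tp(4) by force
  qed
  have "finite (RR (mset_set S))" using sub IH(1) fS' by (meson finite_SigmaI finite_imageI finite_subset)
  moreover have "card (RR (mset_set S)) \<le> card (RR (mset_set S')) * card S'"
    using card_mono[OF _ sub] card_image_le[of "RR (mset_set S') \<times> S'" "\<lambda>(t', p). ins p m t'"] IH(1) fS'
    by (simp add: card_cartesian_product)
  moreover have "card (RR (mset_set S')) * card S' \<le> fact (Suc n)"
  proof -
    have "card (RR (mset_set S')) * card S' \<le> fact n * Suc n" unfolding cS' using IH(2) by (rule mult_right_mono) simp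
    also have "\<dots> = fact (Suc n)" by (simp add: mult.commute)
    finally show ?thesis .
  qed
  ultimately show ?case by simp
qed

lemma exist_aux:
  "(\<forall>x\<in>#M. \<forall>a. \<exists>lt. shape lt = x \<and> labels lt = mset_set {a..<a+nodes x} \<and> increasing lt \<and> root_label lt = a)
   \<Longrightarrow> \<exists>N. image_mset shape N = M \<and> \<Sum>\<^sub># (image_mset labels N) = mset_set {b..<b + \<Sum>\<^sub># (image_mset nodes M)}
        \<and> (\<forall>c\<in>#N. increasing c \<and> b \<le> root_label c)"
proof (induction M arbitrary: b)
  case empty
  show ?case by (rule exI[of _ "{#}"]) simp
next
  case (add x M)
  have pM: "\<forall>x\<in>#M. \<forall>a. \<exists>lt. shape lt = x \<and> labels lt = mset_set {a..<a+nodes x} \<and> increasing lt \<and> root_label lt = a"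
    using add.prems by simp
  obtain N where N: "image_mset shape N = M" "\<Sum>\<^sub># (image_mset labels N) = mset_set {b..<b + \<Sum>\<^sub># (image_mset nodes M)}"
        "\<forall>c\<in>#N. increasing c \<and> b \<le> root_label c" using add.IH[OF pM, of b] by blast
  let ?s = "\<Sum>\<^sub># (image_mset nodes M)"
  obtain lt where lt: "shape lt = x" "labels lt = mset_set {b + ?s..<b + ?s + nodes x}" "increasing lt" "root_label lt = b + ?s"
    using add.prems by auto
  have "mset_set {b..<b + ?s + nodes x} = mset_set {b..<b + ?s} + mset_set {b + ?s..<b + ?s + nodes x}"
    by (subst mset_set_Union[symmetric]) (auto simp: ivl_disj_un)
  then show ?case using N lt
    by (intro exI[of _ "add_mset lt N"]) (simp add: add.commute add.left_commute)
qed

lemma exist: "\<exists>lt. shape lt = t \<and> labels lt = mset_set {a..<a+nodes t} \<and> increasing lt \<and> root_label lt = a"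
proof (induction t arbitrary: a)
  case (PNode M)
  then obtain N where N: "image_mset shape N = M" "\<Sum>\<^sub># (image_mset labels N) = mset_set {Suc a..<Suc a + \<Sum>\<^sub># (image_mset nodes M)}"
        "\<forall>c\<in>#N. increasing c \<and> Suc a \<le> root_label c"
    using exist_aux[of M "Suc a"] by blast
  have "mset_set {a..<a + nodes (PNode M)} = add_mset a (mset_set {Suc a..<Suc a + \<Sum>\<^sub># (image_mset nodes M)})"
  proof -
    have "{a..<a + nodes (PNode M)} = insert a {Suc a..<Suc a + \<Sum>\<^sub># (image_mset nodes M)}" by auto
    then show ?thesis by simp
  qed
  then show ?case using N
    by (intro exI[of _ "LNode a N"]) auto
qed

lemma ell_bounds: "nodes t \<ge> 1 \<Longrightarrow> 1 \<le> ell t \<and> ell t \<le> fact (nodes t - 1)"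
proof -
  assume k: "nodes t \<ge> 1"
  let ?A = "{lt. shape lt = t \<and> labels lt = mset_set {1..nodes t} \<and> increasing lt}"
  have sub: "?A \<subseteq> RR (mset_set {1..nodes t})" unfolding RR_def by auto
  have c: "card {1..nodes t} = Suc (nodes t - 1)" using k by simp
  from count_RR[OF _ c] have f: "finite (RR (mset_set {1..nodes t}))" "card (RR (mset_set {1..nodes t})) \<le> fact (nodes t - 1)" by auto
  obtain lt where "shape lt = t \<and> labels lt = mset_set {1..<1+nodes t} \<and> increasing lt" using exist by blast
  moreover have "{1..<1+nodes t} = {1..nodes t}" by auto
  ultimately have "lt \<in> ?A" by simp
  moreover have fA: "finite ?A" using f(1) sub finite_subset by blast
  ultimately have "card ?A > 0" using card_gt_0_iff by blast
  then have "card ?A \<ge> 1" by simp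
  moreover have "card ?A \<le> fact (nodes t - 1)" by (rule order_trans[OF card_mono[OF f(1) sub] f(2)])
  ultimately show ?thesis unfolding ell_def by simp
qed

lemma exp_cubic: assumes "(x::real) \<ge> 0" shows "1 - x + x^2/2 - x^3/6 \<le> exp (-x)"
proof -
  have g2: "1 - y + y^2/2 - exp (-y) \<ge> 0" if "y \<ge> 0" for y :: real
  proof -
    have "(\<lambda>y. 1 - y + y^2/2 - exp (-y)) 0 \<le> (\<lambda>y. 1 - y + y^2/2 - exp (-y)) y"
    proof (rule DERIV_nonneg_imp_nondecreasing[OF that])
      fix z :: real assume "0 \<le> z" "z \<le> y"
      have "((\<lambda>y. 1 - y + y^2/2 - exp (-y)) has_real_derivative (-1 + z + exp (-z))) (at z)"
        by (auto intro!: derivative_eq_intros simp: power2_eq_square)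
      moreover have "-1 + z + exp (-z) \<ge> 0" using exp_ge_add_one_self[of "-z"] by linarith
      ultimately show "\<exists>d. ((\<lambda>y. 1 - y + y^2/2 - exp (-y)) has_real_derivative d) (at z) \<and> 0 \<le> d" by blast
    qed
    then show ?thesis by simp
  qed
  have "(\<lambda>y. exp (-y) - (1 - y + y^2/2 - y^3/6)) 0 \<le> (\<lambda>y. exp (-y) - (1 - y + y^2/2 - y^3/6)) x"
  proof (rule DERIV_nonneg_imp_nondecreasing[OF assms])
    fix z :: real assume z: "0 \<le> z" "z \<le> x"
    have "((\<lambda>y. exp (-y) - (1 - y + y^2/2 - y^3/6)) has_real_derivative (1 - z + z^2/2 - exp (-z))) (at z)"
      by (auto intro!: derivative_eq_intros simp: power2_eq_square power3_eq_cube)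
    then show "\<exists>d. ((\<lambda>y. exp (-y) - (1 - y + y^2/2 - y^3/6)) has_real_derivative d) (at z) \<and> 0 \<le> d"
      using g2[of z] z by blast
  qed
  then show ?thesis by simp
qed

lemma integral_lower:
  fixes w r I :: real and k :: nat and p :: "real \<Rightarrow> real"
  assumes "\<And>v. v \<in> {0..r} \<Longrightarrow> p v \<le> exp (- w * v ^ k)" and "(p has_integral I) {0..r}"
  shows "I \<le> integral {0..r} (\<lambda>v. exp (- w * v ^ k))"
proof -
  have "(\<lambda>v. exp (- w * v ^ k)) integrable_on {0..r}"
    by (intro integrable_continuous_interval continuous_intros)
  then show ?thesis using has_integral_le[OF assms(2) integrable_integral] assms(1) by blast
qed

lemma lin_bound:
  fixes w r :: real and k :: nat
  assumes "r \<ge> 0"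
  shows "r - w * r^(k+1) / (k+1) \<le> integral {0..r} (\<lambda>v. exp (- w * v ^ k))"
proof (rule integral_lower)
  fix v :: real assume v: "v \<in> {0..r}"
  show "1 - w * v^k \<le> exp (- w * v ^ k)" using exp_ge_add_one_self[of "- w * v ^ k"] by simp
next
  have "((\<lambda>v. 1 - w * v^k) has_integral ((\<lambda>v. v - w * v^(k+1) / (k+1)) r - (\<lambda>v. v - w * v^(k+1) / (k+1)) 0)) {0..r}"
  proof (rule fundamental_theorem_of_calculus[OF assms])
    fix x :: real assume "x \<in> {0..r}"
    show "((\<lambda>v. v - w * v^(k+1) / (k+1)) has_vector_derivative (1 - w * x^k)) (at x within {0..r})"
    proof -
      have "((\<lambda>v. v - w * v^(k+1) / (k+1)) has_real_derivative (1 - w * (real (k+1) * x ^ (k + 1 - Suc 0)) / (k+1))) (at x within {0..r})"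
        by (intro DERIV_diff DERIV_ident DERIV_cdivide DERIV_cmult DERIV_pow)
      moreover have "1 - w * (real (k+1) * x ^ (k + 1 - Suc 0)) / (k+1) = 1 - w * x^k"
        by (simp add: field_simps)
      ultimately show ?thesis using has_real_derivative_iff_has_vector_derivative by metis
    qed
  qed
  then show "((\<lambda>v. 1 - w * v^k) has_integral (r - w * r^(k+1) / (k+1))) {0..r}" by simp
qed

lemma pow_bound:
  fixes x :: real and n :: nat
  assumes "0 \<le> x" "x \<le> 1" "n * x \<le> 1/2"
  shows "(1 + x)^n \<le> 2"
proof -
  have b: "1 - n * x \<le> (1 - x)^n" using Bernoulli_inequality[of "-x" n] assms by simp
  have P: "0 \<le> (1 + x)^n" using assms by simp
  have sq: "x^2 \<le> 1" using assms by (simp add: power_le_one)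
  have "(1 + x)^n * (1 - x)^n = ((1 + x) * (1 - x))^n" by (simp add: power_mult_distrib)
  also have "(1 + x) * (1 - x) = 1 - x^2" by (simp add: power2_eq_square algebra_simps)
  also have "(1 - x^2)^n \<le> 1" by (rule power_le_one) (use sq in auto)
  finally have e: "(1 + x)^n * (1 - x)^n \<le> 1" .
  have "(1 + x)^n * (1/2) \<le> (1 + x)^n * (1 - n * x)" by (rule mult_left_mono) (use assms P in auto)
  also have "\<dots> \<le> (1 + x)^n * (1 - x)^n" by (rule mult_left_mono[OF b P])
  finally show ?thesis using e by linarith
qed

lemma k2_bound: "1 < integral {0..3/2} (\<lambda>v. exp (- (1/2) * v ^ 2) :: real)"
proof -
  let ?F = "\<lambda>v::real. v - v^3/6 + v^5/40 - v^7/336"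
  have "?F (3/2) \<le> integral {0..3/2} (\<lambda>v. exp (- (1/2) * v ^ 2) :: real)"
  proof (rule integral_lower)
    fix v :: real assume v: "v \<in> {0..3/2}"
    have "1 - (v^2/2) + (v^2/2)^2/2 - (v^2/2)^3/6 \<le> exp (- (v^2/2))" by (rule exp_cubic) simp
    then show "1 - v^2/2 + v^4/8 - v^6/48 \<le> exp (- (1/2) * v ^ 2)"
      by (simp add: power_divide field_simps power_mult[symmetric])
  next
    have "((\<lambda>v::real. 1 - v^2/2 + v^4/8 - v^6/48) has_integral (?F (3/2) - ?F 0)) {0..3/2}"
    proof (rule fundamental_theorem_of_calculus)
      fix x :: real assume "x \<in> {0..3/2}"
      show "(?F has_vector_derivative (1 - x^2/2 + x^4/8 - x^6/48)) (at x within {0..3/2})"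
        unfolding has_real_derivative_iff_has_vector_derivative[symmetric]
        by (auto intro!: derivative_eq_intros simp: field_simps)
    qed simp
    then show "((\<lambda>v::real. 1 - v^2/2 + v^4/8 - v^6/48) has_integral ?F (3/2)) {0..3/2}" by simp
  qed
  moreover have "1 < ?F (3/2)" by (simp add: power_divide)
  ultimately show ?thesis by linarith
qed

lemma aux: "(b::real) \<noteq> 0 \<Longrightarrow> w * (2 * b / a) / b = 2 * w / a"
  by (cases "a = 0") (simp_all add: field_simps)

lemma poly_part:
  fixes k :: nat and w :: real
  assumes k: "k \<ge> 3" and w: "0 < w" "w \<le> 1 / k"
  shows "(1 + 2 * w / k) ^ (k+1) < 2 * (k+1) / k"
proof -
  have kpos: "(0::real) < k" using k by simp
  have "2 * w / k \<le> 2 / k^2" using w kpos by (simp add: field_simps power2_eq_square)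
  then have "(1 + 2 * w / k) ^ (k+1) \<le> (1 + 2 / k^2) ^ (k+1)"
    using w kpos by (intro power_mono) auto
  also have "\<dots> < 2 * (k+1) / k"
  proof (cases "k \<ge> 5")
    case True
    have k5: "real k \<ge> 5" using True by simp
    have "real (k+1) * (2 / k^2) \<le> 1/2"
    proof -
      have "5 * real k \<le> real k * real k" using k5 by (intro mult_right_mono) auto
      moreover have "4 * (real k + 1) \<le> 5 * real k" using True by simp
      ultimately have "4 * (real k + 1) \<le> real k * real k" by linarith
      then show ?thesis using kpos by (simp add: field_simps power2_eq_square)
    qed
    moreover have "2 / (real k)^2 \<le> 1"
    proof -
      have "5 * 5 \<le> real k * real k" using mult_mono[of 5 "real k" 5 "real k"] k5 by simp
      then show ?thesis using k5 by (simp add: field_simps power2_eq_square)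
    qed
    ultimately have "(1 + 2 / k^2) ^ (k+1) \<le> 2" by (intro pow_bound) auto
    also have "2 < 2 * (real k + 1) / k" using kpos by (simp add: field_simps)
    finally show ?thesis by (simp add: algebra_simps)
  next
    case False
    then have "k = 3 \<or> k = 4" using k by auto
    then show ?thesis by (auto simp: power_divide)
  qed
  finally show ?thesis .
qed

theorem lemma2p1:
  fixes t :: ptree and \<rho> :: real
  assumes "nodes t \<ge> 2"
    and "\<rho> > 0"
    and "integral {0..\<rho>} (\<lambda>v. exp (- wt t * v ^ nodes t)) = 1"
    and "\<forall>r. 0 < r \<and> r < \<rho> \<longrightarrow> integral {0..r} (\<lambda>v. exp (- wt t * v ^ nodes t)) \<noteq> 1"
  shows "\<rho> < 1 + 2 * wt t / real (nodes t)"
proof -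
  define k where "k = nodes t"
  define w where "w = wt t"
  have k2: "k \<ge> 2" using assms(1) k_def by simp
  have eb: "1 \<le> ell t" "ell t \<le> fact (k - 1)" using ell_bounds[of t] k2 k_def by auto
  have fk: "(fact k :: real) = real k * fact (k - 1)" using k2 by (simp add: fact_reduce)
  have fpos: "(0::real) < fact (k - 1)" by simp
  have wpos: "0 < w" unfolding w_def wt_def using eb(1) by simp
  have wle: "w \<le> 1 / k"
  proof -
    have "real (ell t) \<le> fact (k - 1)" using eb(2) by (metis of_nat_fact of_nat_le_iff)
    then have "w \<le> fact (k - 1) / fact k" unfolding w_def wt_def k_def[symmetric]
      by (simp add: divide_right_mono)
    also have "\<dots> = 1 / k" using fk fpos by simp
    finally show ?thesis .
  qed
  define r0 where "r0 = 1 + 2 * w / k"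
  have r0pos: "0 \<le> r0" unfolding r0_def using wpos by simp
  have key: "1 < integral {0..r0} (\<lambda>v. exp (- w * v ^ k))"
  proof (cases "k = 2")
    case True
    have "w \<le> 1/2" using wle True by simp
    moreover have "ell t = 1" using eb True by simp
    then have e2: "w = 1/2" unfolding w_def wt_def using True k_def by simp
    moreover have e1: "r0 = 3/2" unfolding r0_def using True e2 by simp
    show ?thesis using k2_bound unfolding e1 e2 True .
  next
    case False
    then have k3: "k \<ge> 3" using k2 by simp
    have kpos: "(0::real) < k" using k3 by simp
    have p: "r0 ^ (k+1) < 2 * (k+1) / k" unfolding r0_def by (rule poly_part[OF k3 wpos wle])
    have "w * r0 ^ (k+1) / (k+1) < w * (2 * (k+1) / k) / (k+1)"
      using p wpos by (intro divide_strict_right_mono mult_strict_left_mono) auto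
    also have "\<dots> = 2 * w / k" using aux[of "real (k+1)" w "real k"] by simp
    finally have "1 < r0 - w * r0 ^ (k+1) / (k+1)" unfolding r0_def by simp
    also have "\<dots> \<le> integral {0..r0} (\<lambda>v. exp (- w * v ^ k))" by (rule lin_bound[OF r0pos])
    finally show ?thesis .
  qed
  show ?thesis
  proof (rule ccontr)
    assume "\<not> \<rho> < 1 + 2 * wt t / real (nodes t)"
    then have "r0 \<le> \<rho>" unfolding r0_def w_def k_def by simp
    then have "integral {0..r0} (\<lambda>v. exp (- w * v ^ k)) \<le> integral {0..\<rho>} (\<lambda>v. exp (- w * v ^ k))"
      by (intro integral_subset_le integrable_continuous_interval continuous_intros) auto
    then show False using key assms(3) unfolding w_def k_def by simp
  qed
qed

end
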